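(* Let $\mathcal P$ be a family of filters over some set $I$. A product $\prod_{j\in J} X_j$ of (nonempty) topological spaces is sequencewise $\mathcal P$-compact if and only if, for every $K\subseteq J$ with $|K|\leq|\mathcal P|$, the subproduct $\prod_{j\in K} X_j$ is sequencewise $\mathcal P$-compact.
   Context: No separation axioms are assumed; all topological spaces are nonempty. If $X$ is a topological space, $(x_i)_{i\in I}$ is an $I$-indexed sequence of elements of $X$ and $F$ is a filter over $I$, a point $x\in X$ is an $F$-limit point of $(x_i)_{i\in I}$ (equivalently, the sequence $F$-converges to $x$) if $\{i\in I\mid x_i\in U\}\in F$ for every open neighborhood $U$ of $x$. If $\mathcal P$ is a family of filters over $I$, a space $X$ is sequencewise $\mathcal P$-compact if for every $I$-indexed sequence of elements of $X$ there is $F\in\mathcal P$ such that the sequence has an $F$-limit point in $X$. *)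

theory Defs
  imports "HOL-Analysis.Analysis"
begin

definition seqwise_compact :: "'i filter set \<Rightarrow> 'a topology \<Rightarrow> bool" where
  "seqwise_compact P X \<longleftrightarrow>
     (\<forall>x :: 'i \<Rightarrow> 'a. (\<forall>i. x i \<in> topspace X) \<longrightarrow> (\<exists>F\<in>P. \<exists>p. limitin X x p F))"

end

theory Submission
  imports Defs
begin

theorem theorem2p1:
  fixes P :: "'i filter set"
    and X :: "'j \<Rightarrow> 'a topology"
    and J :: "'j set"
  assumes "\<forall>j\<in>J. topspace (X j) \<noteq> {}"
  shows "seqwise_compact P (product_topology X J) \<longleftrightarrow>
         (\<forall>K. K \<subseteq> J \<and> (card_of K, card_of P) \<in> ordLeq
               \<longrightarrow> seqwise_compact P (product_topology X K))"
proof
  assume SJ: "seqwise_compact P (product_topology X J)"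
  show "\<forall>K. K \<subseteq> J \<and> (card_of K, card_of P) \<in> ordLeq
               \<longrightarrow> seqwise_compact P (product_topology X K)"
  proof (intro allI impI)
    fix K assume "K \<subseteq> J \<and> (card_of K, card_of P) \<in> ordLeq"
    then have KJ: "K \<subseteq> J" by blast
    define c where "c = (\<lambda>j. SOME z. z \<in> topspace (X j))"
    have c: "\<And>j. j \<in> J \<Longrightarrow> c j \<in> topspace (X j)"
      unfolding c_def using assms by (meson ex_in_conv someI_ex)
    show "seqwise_compact P (product_topology X K)"
      unfolding seqwise_compact_def
    proof (intro allI impI)
      fix y :: "'i \<Rightarrow> 'j \<Rightarrow> 'a"
      assume y: "\<forall>i. y i \<in> topspace (product_topology X K)"
      define x where "x = (\<lambda>i j. if j \<in> K then y i j else if j \<in> J then c j else undefined)"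
      have "\<forall>i. x i \<in> topspace (product_topology X J)"
        using y c KJ by (auto simp: x_def PiE_def Pi_def extensional_def)
      then obtain F p where F: "F \<in> P" and lp: "limitin (product_topology X J) x p F"
        using SJ unfolding seqwise_compact_def by blast
      have "limitin (product_topology X K) y (restrict p K) F"
        unfolding limitin_componentwise
      proof (intro conjI ballI)
        show "restrict p K \<in> extensional K" by simp
        show "\<forall>\<^sub>F a in F. y a \<in> topspace (product_topology X K)" using y by simp
      next
        fix j assume j: "j \<in> K"
        have "limitin (X j) (\<lambda>c. x c j) (p j) F"
          using lp j KJ unfolding limitin_componentwise by blast
        then show "limitin (X j) (\<lambda>c. y c j) (restrict p K j) F"
          using j by (simp add: x_def)
      qed
      then show "\<exists>F\<in>P. \<exists>p. limitin (product_topology X K) y p F" using F by blast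
    qed
  qed
next
  assume H: "\<forall>K. K \<subseteq> J \<and> (card_of K, card_of P) \<in> ordLeq
               \<longrightarrow> seqwise_compact P (product_topology X K)"
  show "seqwise_compact P (product_topology X J)"
    unfolding seqwise_compact_def
  proof (rule ccontr)
    assume "\<not> (\<forall>x :: 'i \<Rightarrow> 'j \<Rightarrow> 'a. (\<forall>i. x i \<in> topspace (product_topology X J)) \<longrightarrow>
              (\<exists>F\<in>P. \<exists>p. limitin (product_topology X J) x p F))"
    then obtain x :: "'i \<Rightarrow> 'j \<Rightarrow> 'a" where x: "\<forall>i. x i \<in> topspace (product_topology X J)"
      and nl: "\<And>F p. F \<in> P \<Longrightarrow> \<not> limitin (product_topology X J) x p F" by blast
    have "\<forall>F\<in>P. \<exists>j\<in>J. \<forall>q. \<not> limitin (X j) (\<lambda>c. x c j) q F"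
    proof (intro ballI, rule ccontr)
      fix F assume F: "F \<in> P" and "\<not> (\<exists>j\<in>J. \<forall>q. \<not> limitin (X j) (\<lambda>c. x c j) q F)"
      then have "\<forall>j\<in>J. \<exists>q. limitin (X j) (\<lambda>c. x c j) q F" by blast
      then obtain q where q: "\<And>j. j \<in> J \<Longrightarrow> limitin (X j) (\<lambda>c. x c j) (q j) F" by metis
      have "limitin (product_topology X J) x (restrict q J) F"
        unfolding limitin_componentwise using x q by simp
      then show False using nl F by blast
    qed
    then obtain g where g: "\<And>F. F \<in> P \<Longrightarrow> g F \<in> J \<and> (\<forall>q. \<not> limitin (X (g F)) (\<lambda>c. x c (g F)) q F)"
      by metis
    define K where "K = g ` P"
    have KJ: "K \<subseteq> J" using g K_def by blast
    have "(card_of K, card_of P) \<in> ordLeq" unfolding K_def by (rule card_of_image)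
    with KJ H have SK: "seqwise_compact P (product_topology X K)" by blast
    have "\<forall>i. restrict (x i) K \<in> topspace (product_topology X K)"
      using x KJ by (auto simp: PiE_def Pi_def)
    then obtain F p where F: "F \<in> P" and lp: "limitin (product_topology X K) (\<lambda>i. restrict (x i) K) p F"
      using SK unfolding seqwise_compact_def
      by (metis (no_types, lifting) \<open>\<forall>i. restrict (x i) K \<in> topspace (product_topology X K)\<close>)
    have gK: "g F \<in> K" using F K_def by blast
    have "limitin (X (g F)) (\<lambda>c. restrict (x c) K (g F)) (p (g F)) F"
      using lp gK unfolding limitin_componentwise by blast
    then have "limitin (X (g F)) (\<lambda>c. x c (g F)) (p (g F)) F" using gK by simp
    then show False using g F by blast
  qed
qed

end
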